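(* Let $X$ be a compact metric space and $f\colon X\to X$ continuous. Let $(Z_n^1)_n,\dots,(Z_n^k)_n$ be a finite collection of sequences of subsets of $X$, and write $Z_n=\bigcup_{j=1}^kZ_n^j$. Then for every $\xi\in C(X)$, $$\overline{CP}_{(Z_n)}(\xi)=\max_{1\le j\le k}\overline{CP}_{(Z_n^j)_n}(\xi).$$
   Context: $S_n\xi=\sum_{i=0}^{n-1}\xi\circ f^i$; $B(x,n,\delta)=\{y\mid d(f^ix,f^iy)<\delta,\ 0\le i\le n\}$. For a sequence $(Y_n)$ of subsets, $\Lambda_n(Y_n,\xi,\delta)=\inf\{\sum_{x\in E}e^{S_n\xi(x)}\mid\bigcup_{x\in E}B(x,n,\delta)\supset Y_n\}$ and the upper capacity pressure is $\overline{CP}_{(Y_n)}(\xi)=\lim_{\delta\to0}\limsup_{n\to\infty}\frac1n\log\Lambda_n(Y_n,\xi,\delta)$. *)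

theory Defs
  imports "HOL-Analysis.Analysis" "HOL-Library.Extended_Real"
begin

definition birkhoff_sum :: "('a \<Rightarrow> 'a) \<Rightarrow> ('a \<Rightarrow> real) \<Rightarrow> nat \<Rightarrow> 'a \<Rightarrow> real" where
  "birkhoff_sum f \<xi> n x = (\<Sum>i<n. \<xi> ((f ^^ i) x))"

definition bowen_ball :: "'a::metric_space set \<Rightarrow> ('a \<Rightarrow> 'a) \<Rightarrow> 'a \<Rightarrow> nat \<Rightarrow> real \<Rightarrow> 'a set" where
  "bowen_ball X f x n \<delta> = {y \<in> X. \<forall>i\<le>n. dist ((f ^^ i) x) ((f ^^ i) y) < \<delta>}"

definition Lambda_n :: "'a::metric_space set \<Rightarrow> ('a \<Rightarrow> 'a) \<Rightarrow> nat \<Rightarrow> 'a set \<Rightarrow> ('a \<Rightarrow> real) \<Rightarrow> real \<Rightarrow> ereal" where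
  "Lambda_n X f n Y \<xi> \<delta> =
     Inf {ereal (\<Sum>x\<in>E. exp (birkhoff_sum f \<xi> n x)) | E.
            finite E \<and> E \<subseteq> X \<and> Y \<subseteq> (\<Union>x\<in>E. bowen_ball X f x n \<delta>)}"

definition eln :: "ereal \<Rightarrow> ereal" where
  "eln v = (if v \<le> 0 then -\<infinity> else if v = \<infinity> then \<infinity> else ereal (ln (real_of_ereal v)))"

definition upper_cap_pressure :: "'a::metric_space set \<Rightarrow> ('a \<Rightarrow> 'a) \<Rightarrow> (nat \<Rightarrow> 'a set) \<Rightarrow> ('a \<Rightarrow> real) \<Rightarrow> ereal" where
  "upper_cap_pressure X f Y \<xi> =
     Lim (at_right 0) (\<lambda>\<delta>::real. limsup (\<lambda>n. eln (Lambda_n X f n (Y n) \<xi> \<delta>) / ereal (real n)))"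

end

theory Submission
  imports Defs
begin


lemma lim_antitone:
  fixes g :: "real \<Rightarrow> ereal"
  assumes "\<And>a b. 0 < a \<Longrightarrow> a \<le> b \<Longrightarrow> g b \<le> g a"
  shows "Lim (at_right 0) g = (SUP d\<in>{0<..}. g d)"
proof (rule tendsto_Lim)
  show "\<not> trivial_limit (at_right (0::real))" by simp
  show "(g \<longlongrightarrow> (SUP d\<in>{0<..}. g d)) (at_right 0)"
  proof (rule order_tendstoI)
    fix y assume "y < (SUP d\<in>{0<..}. g d)"
    then obtain d0 where d0: "d0 > 0" "y < g d0" by (auto simp: less_SUP_iff)
    have "y < g d" if "0 < d" "d < d0" for d
    proof -
      have "g d0 \<le> g d" using assms[of d d0] that by simp
      then show ?thesis using d0(2) by (rule less_le_trans[rotated])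
    qed
    then show "eventually (\<lambda>d. y < g d) (at_right 0)"
      unfolding eventually_at_right_field using d0(1) by blast
  next
    fix y assume y: "(SUP d\<in>{0<..}. g d) < y"
    have "g d < y" if "0 < d" for d
    proof -
      have "g d \<le> (SUP d\<in>{0<..}. g d)" using that by (intro SUP_upper) simp
      then show ?thesis using y by (rule le_less_trans)
    qed
    then show "eventually (\<lambda>d. g d < y) (at_right 0)"
      unfolding eventually_at_right_field by (intro exI[of _ 1]) simp
  qed
qed

lemma Lambda_mono_delta:
  assumes "\<delta>1 \<le> \<delta>2"
  shows "Lambda_n X f n Y \<xi> \<delta>2 \<le> Lambda_n X f n Y \<xi> \<delta>1"
proof -
  have bb: "bowen_ball X f x n \<delta>1 \<subseteq> bowen_ball X f x n \<delta>2" for x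
    using assms unfolding bowen_ball_def by (auto intro: less_le_trans)
  have cov: "Y \<subseteq> (\<Union>x\<in>E. bowen_ball X f x n \<delta>2)" if "Y \<subseteq> (\<Union>x\<in>E. bowen_ball X f x n \<delta>1)" for E
    using that bb by blast
  show ?thesis unfolding Lambda_n_def
    by (rule Inf_superset_mono) (use cov in blast)
qed

lemma Lambda_mono_Y:
  assumes "Y \<subseteq> Y'"
  shows "Lambda_n X f n Y \<xi> \<delta> \<le> Lambda_n X f n Y' \<xi> \<delta>"
  unfolding Lambda_n_def
  by (rule Inf_superset_mono) (use assms in blast)

lemma Lambda_nonneg: "0 \<le> Lambda_n X f n Y \<xi> \<delta>"
  unfolding Lambda_n_def apply (rule Inf_greatest) apply clarsimp apply (rule sum_nonneg) apply simp done

lemma sum_UN_le_nonneg: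
  fixes g :: "'a \<Rightarrow> real"
  assumes "finite J" "\<And>j. j\<in>J \<Longrightarrow> finite (E j)" "\<And>x. 0 \<le> g x"
  shows "sum g (\<Union>j\<in>J. E j) \<le> (\<Sum>j\<in>J. sum g (E j))"
  using assms
proof (induction J rule: finite_induct)
  case empty then show ?case by simp
next
  case (insert a J)
  have fin: "finite (\<Union>j\<in>J. E j)" using insert by auto
  have "sum g (\<Union>j\<in>insert a J. E j) = sum g (E a \<union> (\<Union>j\<in>J. E j))" by simp
  also have "\<dots> = sum g (E a) + sum g (\<Union>j\<in>J. E j) - sum g (E a \<inter> (\<Union>j\<in>J. E j))"
    using insert fin by (simp add: sum_Un)
  also have "\<dots> \<le> sum g (E a) + sum g (\<Union>j\<in>J. E j)"
    using insert by (simp add: sum_nonneg)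
  also have "\<dots> \<le> sum g (E a) + (\<Sum>j\<in>J. sum g (E j))" using insert by auto
  finally show ?case using insert by simp
qed

lemma Lambda_union:
  assumes J: "finite J"
  shows "Lambda_n X f n (\<Union>j\<in>J. Y j) \<xi> \<delta> \<le> (\<Sum>j\<in>J. Lambda_n X f n (Y j) \<xi> \<delta>)"
proof (cases "\<exists>j\<in>J. Lambda_n X f n (Y j) \<xi> \<delta> = \<infinity>")
  case True
  then have "(\<Sum>j\<in>J. Lambda_n X f n (Y j) \<xi> \<delta>) = \<infinity>" using J by (simp add: sum_Pinfty)
  then show ?thesis by simp
next
  case False
  define L where "L j = Lambda_n X f n (Y j) \<xi> \<delta>" for j
  define s where "s E = (\<Sum>x\<in>E. exp (birkhoff_sum f \<xi> n x))" for E
  show ?thesis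
  proof (rule ereal_le_epsilon2)
    fix e :: real assume e: "0 < e"
    define c where "c = e / (card J + 1)"
    have c: "c > 0" using e by (simp add: c_def)
    have "\<forall>j\<in>J. \<exists>E. finite E \<and> E \<subseteq> X \<and> Y j \<subseteq> (\<Union>x\<in>E. bowen_ball X f x n \<delta>) \<and> ereal (s E) < L j + ereal c"
    proof
      fix j assume j: "j \<in> J"
      have fin: "\<bar>L j\<bar> \<noteq> \<infinity>" using False j Lambda_nonneg[of X f n "Y j" \<xi> \<delta>]
        by (auto simp: L_def)
      then have "L j < L j + ereal c" using c by (cases "L j") auto
      then have "Inf {ereal (\<Sum>x\<in>E. exp (birkhoff_sum f \<xi> n x)) | E.
            finite E \<and> E \<subseteq> X \<and> Y j \<subseteq> (\<Union>x\<in>E. bowen_ball X f x n \<delta>)} < L j + ereal c"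
        by (simp add: L_def Lambda_n_def)
      then show "\<exists>E. finite E \<and> E \<subseteq> X \<and> Y j \<subseteq> (\<Union>x\<in>E. bowen_ball X f x n \<delta>) \<and> ereal (s E) < L j + ereal c"
        by (auto simp: Inf_less_iff s_def)
    qed
    then obtain E where E: "\<And>j. j\<in>J \<Longrightarrow> finite (E j) \<and> E j \<subseteq> X \<and> Y j \<subseteq> (\<Union>x\<in>E j. bowen_ball X f x n \<delta>) \<and> ereal (s (E j)) < L j + ereal c"
      by metis
    define EE where "EE = (\<Union>j\<in>J. E j)"
    have EEp: "finite EE \<and> EE \<subseteq> X \<and> (\<Union>j\<in>J. Y j) \<subseteq> (\<Union>x\<in>EE. bowen_ball X f x n \<delta>)"
      using E J unfolding EE_def by blast
    have "Lambda_n X f n (\<Union>j\<in>J. Y j) \<xi> \<delta> \<le> ereal (s EE)"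
      unfolding Lambda_n_def s_def
      by (rule Inf_lower) (use EEp in blast)
    also have "s EE \<le> (\<Sum>j\<in>J. s (E j))"
      unfolding s_def EE_def by (rule sum_UN_le_nonneg) (use J E in auto)
    then have "ereal (s EE) \<le> (\<Sum>j\<in>J. ereal (s (E j)))" by simp
    also have "\<dots> \<le> (\<Sum>j\<in>J. L j + ereal c)"
      by (rule sum_mono) (use E in \<open>auto intro: less_imp_le\<close>)
    also have "\<dots> = (\<Sum>j\<in>J. L j) + ereal (card J * c)"
      by (simp add: sum.distrib)
    also have "card J * c \<le> e"
      using e by (simp add: c_def field_simps)
    then have "(\<Sum>j\<in>J. L j) + ereal (card J * c) \<le> (\<Sum>j\<in>J. L j) + ereal e"
      by (intro add_left_mono) simp
    finally show "Lambda_n X f n (\<Union>j\<in>J. Y j) \<xi> \<delta> \<le> (\<Sum>j\<in>J. Lambda_n X f n (Y j) \<xi> \<delta>) + ereal e"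
      by (simp add: L_def)
  qed
qed

lemma eln_mono: "x \<le> y \<Longrightarrow> eln x \<le> eln y"
  unfolding eln_def by (cases x; cases y) auto

lemma eln_mult_le:
  fixes m :: ereal and c :: real
  assumes "c \<ge> 1" "m \<ge> 0"
  shows "eln (ereal c * m) \<le> ereal (ln c) + eln m"
proof (cases m)
  case (real r)
  show ?thesis
  proof (cases "r = 0")
    case True then show ?thesis using real by (simp add: eln_def)
  next
    case False
    then have "r > 0" using real assms by simp
    then show ?thesis using real assms by (simp add: eln_def ln_mult)
  qed
next
  case PInf then show ?thesis using assms by (simp add: eln_def)
next
  case MInf then show ?thesis using assms by simp
qed

lemma ereal_add_div:
  fixes b :: ereal
  assumes "n > (0::real)"
  shows "(ereal a + b) / ereal n = ereal (a / n) + b / ereal n"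
  using assms by (cases b) (auto simp: add_divide_distrib)

lemma pointwise_bound:
  assumes J: "finite J" "J \<noteq> {}" and n: "n > 0"
  shows "\<exists>j\<in>J. eln (Lambda_n X f n (\<Union>j\<in>J. Y j) \<xi> \<delta>) / ereal (real n)
            \<le> ereal (ln (card J) / real n) + eln (Lambda_n X f n (Y j) \<xi> \<delta>) / ereal (real n)"
proof -
  define L where "L j = Lambda_n X f n (Y j) \<xi> \<delta>" for j
  define M where "M = Max (L ` J)"
  have "M \<in> L ` J" unfolding M_def using J by (intro Max_in) auto
  then obtain j0 where j0: "j0 \<in> J" "L j0 = M" by auto
  have Lle: "L j \<le> M" if "j \<in> J" for j unfolding M_def using J that by simp
  have "Lambda_n X f n (\<Union>j\<in>J. Y j) \<xi> \<delta> \<le> (\<Sum>j\<in>J. L j)"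
    unfolding L_def by (rule Lambda_union[OF J(1)])
  also have "\<dots> \<le> (\<Sum>j\<in>J. M)" by (rule sum_mono) (use Lle in auto)
  also have "\<dots> \<le> ereal (real (card J)) * M"
  proof -
    have cJ: "card J > 0" using J by (simp add: card_gt_0_iff)
    have "M \<ge> 0" using j0 Lambda_nonneg[of X f n "Y j0" \<xi> \<delta>] by (simp add: L_def)
    then show ?thesis using cJ J by (cases M) auto
  qed
  finally have "eln (Lambda_n X f n (\<Union>j\<in>J. Y j) \<xi> \<delta>) \<le> eln (ereal (real (card J)) * M)"
    by (rule eln_mono)
  also have "\<dots> \<le> ereal (ln (card J)) + eln M"
    apply (rule eln_mult_le)
    using J j0 Lambda_nonneg[of X f n "Y j0" \<xi> \<delta>] by (auto simp: L_def Suc_le_eq card_gt_0_iff)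
  finally have "eln (Lambda_n X f n (\<Union>j\<in>J. Y j) \<xi> \<delta>) / ereal (real n)
       \<le> (ereal (ln (card J)) + eln M) / ereal (real n)"
    using n by (intro ereal_divide_right_mono) auto
  also have "\<dots> = ereal (ln (card J) / real n) + eln M / ereal (real n)"
    using n by (intro ereal_add_div) auto
  finally show ?thesis using j0 by (auto simp: L_def)
qed

theorem lemma4p1:
  fixes X :: "'a::metric_space set" and f :: "'a \<Rightarrow> 'a"
    and Z :: "nat \<Rightarrow> nat \<Rightarrow> 'a set" and k :: nat and \<xi> :: "'a \<Rightarrow> real"
  assumes "compact X" and "continuous_on X f" and "f ` X \<subseteq> X"
    and "k \<ge> 1"
    and "\<And>j n. j \<in> {1..k} \<Longrightarrow> Z j n \<subseteq> X"
    and "continuous_on X \<xi>"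
  shows "upper_cap_pressure X f (\<lambda>n. \<Union>j\<in>{1..k}. Z j n) \<xi>
           = Max ((\<lambda>j. upper_cap_pressure X f (Z j) \<xi>) ` {1..k})"
proof -
  define P where "P Y \<delta> = limsup (\<lambda>n. eln (Lambda_n X f n (Y n) \<xi> \<delta>) / ereal (real n))"
    for Y :: "nat \<Rightarrow> 'a set" and \<delta> :: real
  define U where "U = (\<lambda>n. \<Union>j\<in>{1..k}. Z j n)"
  have ucp: "upper_cap_pressure X f Y \<xi> = Lim (at_right 0) (P Y)" for Y
    unfolding upper_cap_pressure_def P_def by simp
  have Pmono: "P Y b \<le> P Y a" if "0 < a" "a \<le> b" for Y a b
    unfolding P_def
    by (rule Limsup_mono, rule eventually_mono[OF eventually_gt_at_top[of 0]])
       (intro ereal_divide_right_mono eln_mono Lambda_mono_delta, use that in auto)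
  have Plim: "Lim (at_right 0) (P Y) = (SUP d\<in>{0<..}. P Y d)" for Y
    by (rule lim_antitone) (rule Pmono)
  have J: "finite {1..k}" "{1..k} \<noteq> {}" using assms(4) by auto
  have Peq: "P U \<delta> = (SUP j\<in>{1..k}. P (Z j) \<delta>)" for \<delta>
  proof (rule antisym)
    show "(SUP j\<in>{1..k}. P (Z j) \<delta>) \<le> P U \<delta>"
    proof (rule SUP_least)
      fix j assume j: "j \<in> {1..k}"
      show "P (Z j) \<delta> \<le> P U \<delta>"
        unfolding P_def
        by (rule Limsup_mono, rule eventually_mono[OF eventually_gt_at_top[of 0]])
           (intro ereal_divide_right_mono eln_mono Lambda_mono_Y, use j in \<open>auto simp: U_def\<close>)
    qed
  next
    define M where "M = (SUP j\<in>{1..k}. P (Z j) \<delta>)"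
    define a where "a j n = eln (Lambda_n X f n (Z j n) \<xi> \<delta>) / ereal (real n)" for j n
    show "P U \<delta> \<le> M"
    proof (rule dense_ge)
      fix y assume My: "M < y"
      then obtain z where z: "M < z" "z < y" using dense by blast
      have "\<forall>j\<in>{1..k}. eventually (\<lambda>n. a j n < z) sequentially"
      proof
        fix j assume j: "j \<in> {1..k}"
        have "P (Z j) \<delta> \<le> M" unfolding M_def using j by (rule SUP_upper)
        then have "limsup (a j) < z" using z by (auto simp: P_def a_def[abs_def] intro: le_less_trans)
        then show "eventually (\<lambda>n. a j n < z) sequentially" by (rule Limsup_lessD)
      qed
      then have ev1: "eventually (\<lambda>n. \<forall>j\<in>{1..k}. a j n < z) sequentially"
        using J by (intro eventually_ball_finite) auto
      show "P U \<delta> \<le> y"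
      proof (cases y)
        case PInf then show ?thesis by simp
      next
        case MInf then show ?thesis using z by simp
      next
        case (real yr)
        have "z \<noteq> -\<infinity>" using z by auto
        moreover have "z \<noteq> \<infinity>" using z real by auto
        ultimately obtain zr where zr: "z = ereal zr" by (cases z) auto
        have "zr < yr" using z real zr by simp
        then have ev2: "eventually (\<lambda>n. ln (card {1..k}) / real n < yr - zr) sequentially"
          using order_tendstoD(2)[OF lim_const_over_n[of "ln (card {1..k})"]] by simp
        show ?thesis
          unfolding P_def
        proof (rule Limsup_bounded)
          show "eventually (\<lambda>n. eln (Lambda_n X f n (U n) \<xi> \<delta>) / ereal (real n) \<le> y) sequentially"
            using ev1 ev2 eventually_gt_at_top[of 0]
          proof eventually_elim
            case (elim n)
            obtain j where j: "j \<in> {1..k}"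
              and le: "eln (Lambda_n X f n (\<Union>j\<in>{1..k}. Z j n) \<xi> \<delta>) / ereal (real n)
                \<le> ereal (ln (card {1..k}) / real n) + a j n"
              using pointwise_bound[OF J, of n X f "\<lambda>j. Z j n" \<xi> \<delta>] elim(3)
              by (auto simp: a_def)
            have "ereal (ln (card {1..k}) / real n) + a j n \<le> ereal (ln (card {1..k}) / real n) + ereal zr"
              using elim(1) j zr by (intro add_left_mono) (auto intro: less_imp_le)
            also have "\<dots> \<le> y" using elim(2) real by simp
            finally show ?case using le by (simp add: U_def)
          qed
        qed
      qed
    qed
  qed
  have "upper_cap_pressure X f U \<xi> = (SUP d\<in>{0<..}. P U d)" by (simp add: ucp Plim)
  also have "\<dots> = (SUP d\<in>{0<..}. SUP j\<in>{1..k}. P (Z j) d)" by (simp add: Peq)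
  also have "\<dots> = (SUP j\<in>{1..k}. SUP d\<in>{0<..}. P (Z j) d)" by (rule SUP_commute)
  also have "\<dots> = (SUP j\<in>{1..k}. upper_cap_pressure X f (Z j) \<xi>)" by (simp add: ucp Plim)
  also have "\<dots> = Max ((\<lambda>j. upper_cap_pressure X f (Z j) \<xi>) ` {1..k})"
    using J by (intro cSup_eq_Max) auto
  finally show ?thesis by (simp only: U_def)
qed

end
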